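(* Every algebra in the class $\mathcal A$ has a distributive congruence lattice (i.e. $\mathcal A$ is congruence distributive). The variety $\mathcal W$ is arithmetical (congruence permutable and congruence distributive) and congruence regular (for every $\mathbf B\in\mathcal W$, every element $a$ of $\mathbf B$ and all congruences $\Theta,\Phi$ of $\mathbf B$, $[a]\Theta=[a]\Phi$ implies $\Theta=\Phi$).
   Context: A bounded directoid with unary operation is an algebra $(P,\sqcup,{}',0,1)$ of type $(2,1,0,0)$ satisfying $x\sqcup x=x$, $x\sqcup y=y\sqcup x$, $x\sqcup((x\sqcup y)\sqcup z)=(x\sqcup y)\sqcup z$, $x\sqcup 0=x$, $x\sqcup 1=1$. Its induced order is $x\leq y$ iff $x\sqcup y=y$. Put $x\sqcap y:=(x'\sqcup y')'$. Conditions: (i) for all $x,y,z$: if $(x\sqcup z)\sqcup(((x'\sqcap w)\sqcap((x\sqcup y)\sqcap w))\sqcup z)=z$ for all $w\in P$, then $(x\sqcup y)\sqcup z=z$; (ii) $(x\sqcap y)\sqcup x\approx x$; (iii) $(x\sqcup y)\sqcup(x'\sqcup y)\approx 1$; (iv) $x''\approx x$; (i') $x\sqcup y\leq(x\sqcup z)\sqcup((x'\sqcap(x\sqcup y))\sqcup z)$ (as an identity, via the induced order). $\mathcal A$ is the class of bounded directoids with unary operation satisfying (i)–(iv) (equivalently, the directoids assigned to generalized orthomodular posets); $\mathcal W$ is the variety of bounded directoids with unary operation satisfying (ii), (iii), (iv) and (i'). *)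

theory Defs
  imports Main
begin

text \<open>An algebra (P, join, cmp, zero, one) of type (2,1,0,0) is represented by a
 carrier type 'a (the whole type) together with its operations.\<close>

definition bdir :: "('a \<Rightarrow> 'a \<Rightarrow> 'a) \<Rightarrow> ('a \<Rightarrow> 'a) \<Rightarrow> 'a \<Rightarrow> 'a \<Rightarrow> bool" where
  "bdir j c z u \<longleftrightarrow>
     (\<forall>x. j x x = x) \<and> (\<forall>x y. j x y = j y x) \<and>
     (\<forall>x y w. j x (j (j x y) w) = j (j x y) w) \<and>
     (\<forall>x. j x z = x) \<and> (\<forall>x. j x u = u)"

definition dmeet :: "('a \<Rightarrow> 'a \<Rightarrow> 'a) \<Rightarrow> ('a \<Rightarrow> 'a) \<Rightarrow> 'a \<Rightarrow> 'a \<Rightarrow> 'a" where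
  "dmeet j c x y = c (j (c x) (c y))"

definition dleq :: "('a \<Rightarrow> 'a \<Rightarrow> 'a) \<Rightarrow> 'a \<Rightarrow> 'a \<Rightarrow> bool" where
  "dleq j x y \<longleftrightarrow> j x y = y"

definition cond_i :: "('a \<Rightarrow> 'a \<Rightarrow> 'a) \<Rightarrow> ('a \<Rightarrow> 'a) \<Rightarrow> bool" where
  "cond_i j c \<longleftrightarrow> (\<forall>x y z.
     (\<forall>w. j (j x z) (j (dmeet j c (dmeet j c (c x) w) (dmeet j c (j x y) w)) z) = z)
     \<longrightarrow> j (j x y) z = z)"

definition cond_ii :: "('a \<Rightarrow> 'a \<Rightarrow> 'a) \<Rightarrow> ('a \<Rightarrow> 'a) \<Rightarrow> bool" where
  "cond_ii j c \<longleftrightarrow> (\<forall>x y. j (dmeet j c x y) x = x)"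

definition cond_iii :: "('a \<Rightarrow> 'a \<Rightarrow> 'a) \<Rightarrow> ('a \<Rightarrow> 'a) \<Rightarrow> 'a \<Rightarrow> bool" where
  "cond_iii j c u \<longleftrightarrow> (\<forall>x y. j (j x y) (j (c x) y) = u)"

definition cond_iv :: "('a \<Rightarrow> 'a) \<Rightarrow> bool" where
  "cond_iv c \<longleftrightarrow> (\<forall>x. c (c x) = x)"

definition cond_i' :: "('a \<Rightarrow> 'a \<Rightarrow> 'a) \<Rightarrow> ('a \<Rightarrow> 'a) \<Rightarrow> bool" where
  "cond_i' j c \<longleftrightarrow> (\<forall>x y z.
     dleq j (j x y) (j (j x z) (j (dmeet j c (c x) (j x y)) z)))"

definition in_A :: "('a \<Rightarrow> 'a \<Rightarrow> 'a) \<Rightarrow> ('a \<Rightarrow> 'a) \<Rightarrow> 'a \<Rightarrow> 'a \<Rightarrow> bool" where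
  "in_A j c z u \<longleftrightarrow> bdir j c z u \<and> cond_i j c \<and> cond_ii j c \<and> cond_iii j c u \<and> cond_iv c"

definition in_W :: "('a \<Rightarrow> 'a \<Rightarrow> 'a) \<Rightarrow> ('a \<Rightarrow> 'a) \<Rightarrow> 'a \<Rightarrow> 'a \<Rightarrow> bool" where
  "in_W j c z u \<longleftrightarrow> bdir j c z u \<and> cond_ii j c \<and> cond_iii j c u \<and> cond_iv c \<and> cond_i' j c"

text \<open>Congruences of an algebra of type (2,1,0,0) (nullary operations are trivially compatible).\<close>

definition is_con :: "('a \<Rightarrow> 'a \<Rightarrow> 'a) \<Rightarrow> ('a \<Rightarrow> 'a) \<Rightarrow> 'a rel \<Rightarrow> bool" where
  "is_con j c R \<longleftrightarrow> equiv UNIV R \<and>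
     (\<forall>a a' b b'. (a, a') \<in> R \<longrightarrow> (b, b') \<in> R \<longrightarrow> (j a b, j a' b') \<in> R) \<and>
     (\<forall>a a'. (a, a') \<in> R \<longrightarrow> (c a, c a') \<in> R)"

definition con_join :: "('a \<Rightarrow> 'a \<Rightarrow> 'a) \<Rightarrow> ('a \<Rightarrow> 'a) \<Rightarrow> 'a rel \<Rightarrow> 'a rel \<Rightarrow> 'a rel" where
  "con_join j c R S = \<Inter>{T. is_con j c T \<and> R \<union> S \<subseteq> T}"

definition con_distributive :: "('a \<Rightarrow> 'a \<Rightarrow> 'a) \<Rightarrow> ('a \<Rightarrow> 'a) \<Rightarrow> bool" where
  "con_distributive j c \<longleftrightarrow> (\<forall>R S T. is_con j c R \<longrightarrow> is_con j c S \<longrightarrow> is_con j c T \<longrightarrow>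
     R \<inter> con_join j c S T = con_join j c (R \<inter> S) (R \<inter> T))"

definition con_permutable :: "('a \<Rightarrow> 'a \<Rightarrow> 'a) \<Rightarrow> ('a \<Rightarrow> 'a) \<Rightarrow> bool" where
  "con_permutable j c \<longleftrightarrow> (\<forall>R S. is_con j c R \<longrightarrow> is_con j c S \<longrightarrow> R O S = S O R)"

definition con_regular :: "('a \<Rightarrow> 'a \<Rightarrow> 'a) \<Rightarrow> ('a \<Rightarrow> 'a) \<Rightarrow> bool" where
  "con_regular j c \<longleftrightarrow> (\<forall>a R S. is_con j c R \<longrightarrow> is_con j c S \<longrightarrow> R `` {a} = S `` {a} \<longrightarrow> R = S)"

end

theory Submission imports Defs begin

definition MJ :: "('a \<Rightarrow> 'a \<Rightarrow> 'a) \<Rightarrow> ('a \<Rightarrow> 'a) \<Rightarrow> 'a \<Rightarrow> 'a \<Rightarrow> 'a \<Rightarrow> 'a" where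
  "MJ j c x y w = j (j (dmeet j c x y) (dmeet j c y w)) (dmeet j c w x)"
definition D1 :: "('a \<Rightarrow> 'a \<Rightarrow> 'a) \<Rightarrow> ('a \<Rightarrow> 'a) \<Rightarrow> 'a \<Rightarrow> 'a \<Rightarrow> 'a" where
  "D1 j c x y = dmeet j c x (c (dmeet j c x y))"
definition D2 :: "('a \<Rightarrow> 'a \<Rightarrow> 'a) \<Rightarrow> ('a \<Rightarrow> 'a) \<Rightarrow> 'a \<Rightarrow> 'a \<Rightarrow> 'a" where
  "D2 j c x y = dmeet j c y (c (dmeet j c x y))"
definition PM :: "('a \<Rightarrow> 'a \<Rightarrow> 'a) \<Rightarrow> ('a \<Rightarrow> 'a) \<Rightarrow> 'a \<Rightarrow> 'a \<Rightarrow> 'a \<Rightarrow> 'a" where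
  "PM j c x y w = j (dmeet j c x (c (D1 j c y w))) (D2 j c y w)"

locale dirc =
  fixes j :: "'a \<Rightarrow> 'a \<Rightarrow> 'a" and c :: "'a \<Rightarrow> 'a" and z u :: 'a
  assumes idem: "j x x = x" and comm: "j x y = j y x"
    and a3: "j x (j (j x y) w) = j (j x y) w" and zr: "j x z = x" and ur: "j x u = u"
    and ii: "j (c (j (c x) (c y))) x = x" and iv: "c (c x) = x"
begin
lemma f90: "j (c (j (c y) x)) y = y" by (metis ii iv)
lemma f132: "c x = j (c (j x y)) (c x)" by (metis f90 iv)

abbreviation mt where "mt \<equiv> dmeet j c"

lemma mt_le1: "j (mt x y) x = x" by (simp add: dmeet_def ii)
lemma mt_le2: "j (mt x y) y = y" by (metis dmeet_def ii comm)
lemma mt_absorb: "mt x (j x y) = x" unfolding dmeet_def by (metis f132 comm iv)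
lemma mt_c0: "mt x (c z) = x" unfolding dmeet_def by (metis iv zr)
lemma mt_idem: "mt x x = x" unfolding dmeet_def by (metis iv idem)
lemma mt_comm: "mt x y = mt y x" unfolding dmeet_def by (metis comm)

lemma MJ1: "MJ j c x x y = x" unfolding MJ_def by (metis mt_idem mt_le1 mt_comm comm)
lemma MJ2: "MJ j c x y x = x" unfolding MJ_def by (metis mt_idem mt_le1 mt_comm comm idem)
lemma MJ3: "MJ j c y x x = x" unfolding MJ_def by (metis mt_idem mt_le1 mt_comm comm)
end

locale wdir = dirc +
  assumes iii: "j (j x y) (j (c x) y) = u"
    and ip: "j (j x y) (j (j x w) (j (c (j (c (c x)) (c (j x y)))) w)) = j (j x w) (j (c (j (c (c x)) (c (j x y)))) w)"
begin

lemma f243: "j x (j x y) = j x y" by (metis a3 zr)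
lemma f306: "j y x = j x (j y x)" by (metis f243 comm)
lemma f139: "j (c (j x (c y))) y = y" by (metis f90 comm)
lemma f98: "j x (c (j (c x) (c y))) = x" by (metis ii comm)
lemma f10181: "j x y = j (j x y) x" by (metis f98 f132 iv)
lemma f270: "u = j (j (j x y) w) (j (c x) (j (j x y) w))" by (metis iii a3)
lemma f4617: "u = j (c x) (j (j x y) w)" by (metis f270 f306)
lemma f15827: "u = j (j x (c y)) (j y w)" by (metis f4617 f139 iv)
lemma f66: "u = j x (c x)" by (metis iii zr)
lemma f72: "u = c z" by (metis f66 zr comm)
lemma f80: "z = c u" by (metis f72 iv)
lemma f33: "j (j x w) (j (c (j x (c (j x y)))) w) = j (j x y) (j (j x w) (j (c (j x (c (j x y)))) w))" by (metis ip iv)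

lemma OM: assumes "j x y = y" shows "j x (c (j (c y) x)) = y"
proof -
  have f16: "y = j x y" using assms by simp
  have f415: "j (j x w) (j (c (j x (c y))) w) = j y (j (j x w) (j (c (j x (c y))) w))" for w
    by (metis f33 f16)
  have f7017: "j x (c (j x (c y))) = j y (j x (c (j x (c y))))"
    by (metis f415 idem f306 comm)
  have f93132: "j x (c (j x (c y))) = j (j x (c (j x (c y)))) y"
    by (metis f10181 f7017)
  have f4337: "y = j y (c (j w (c x)))" for w
    by (metis a3 ii f16 comm iv)
  have f393: "j (c (j x (c (j x w)))) y = j (j x w) (j (c (j x (c (j x w)))) y)" for w
    by (metis f33 f16 f306 comm)
  have f23896: "u = j y (c (j x (c (j x (c y)))))"
    by (metis f15827 f393 comm)
  have f93149: "j y w = j (j x (c (j x (c y)))) (j y w)" for w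
    by (metis f33 f7017 f23896 f80 zr comm f306)
  have f305245: "y = j (j x (c (j x (c y)))) y"
    by (metis f93149 f4337)
  show ?thesis by (metis f305245 f93132 comm)
qed

lemma antitone: "j x y = y \<Longrightarrow> j (c y) (c x) = c x" by (metis f132)

lemma dualOM: assumes "j e x = x" shows "c (j (c x) (c (j e (c x)))) = e"
proof -
  have "j (c x) (c e) = c e" using antitone[OF assms] .
  from OM[OF this] have "j (c x) (c (j (c (c e)) (c x))) = c e" .
  hence "c (j (c x) (c (j e (c x)))) = c (c e)" by (simp add: iv)
  thus ?thesis by (simp add: iv)
qed

lemma mt_xcx: "mt x (c x) = z" unfolding dmeet_def by (metis iv f66 f80 comm)

lemma E1: "PM j c x x y = y"
proof -
  let ?e = "mt x y"
  have ex: "j ?e x = x" by (rule mt_le1)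
  have ey: "j ?e y = y" by (rule mt_le2)
  have "mt x (c (D1 j c x y)) = ?e"
    using dualOM[OF ex] unfolding D1_def dmeet_def by (metis iv comm)
  moreover have "j ?e (D2 j c x y) = y"
    using OM[OF ey] unfolding D2_def dmeet_def by (metis iv comm)
  ultimately show ?thesis unfolding PM_def by simp
qed

lemma d1_0: "D1 j c x x = z" by (simp add: D1_def mt_idem mt_xcx)
lemma d2_0: "D2 j c x x = z" by (simp add: D2_def mt_idem mt_xcx)

lemma E2: "PM j c x y y = x" by (simp add: PM_def d1_0 d2_0 mt_c0 zr)

lemma mt_compl: "mt (mt d a) (c (j (c d) a)) = z"
  unfolding dmeet_def by (metis iv iii comm f80)
end

lemma con_refl: "is_con j c R \<Longrightarrow> (x,x)\<in>R"
  unfolding is_con_def equiv_def refl_on_def by blast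
lemma con_sym: "is_con j c R \<Longrightarrow> (x,y)\<in>R \<Longrightarrow> (y,x)\<in>R"
  unfolding is_con_def equiv_def sym_def by blast
lemma con_trans: "is_con j c R \<Longrightarrow> (x,y)\<in>R \<Longrightarrow> (y,w)\<in>R \<Longrightarrow> (x,w)\<in>R"
  unfolding is_con_def equiv_def trans_def by blast
lemma con_j: "is_con j c R \<Longrightarrow> (a,a')\<in>R \<Longrightarrow> (b,b')\<in>R \<Longrightarrow> (j a b, j a' b')\<in>R"
  unfolding is_con_def by blast
lemma con_c: "is_con j c R \<Longrightarrow> (a,a')\<in>R \<Longrightarrow> (c a, c a')\<in>R"
  unfolding is_con_def by blast
lemma con_m: assumes R: "is_con j c R" and "(a,a')\<in>R" "(b,b')\<in>R" shows "(dmeet j c a b, dmeet j c a' b')\<in>R"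
  unfolding dmeet_def by (rule con_c[OF R], rule con_j[OF R], rule con_c[OF R], fact, rule con_c[OF R], fact)

lemma con_I:
  assumes "\<And>x. (x,x)\<in>R" "\<And>x y. (x,y)\<in>R \<Longrightarrow> (y,x)\<in>R"
    "\<And>x y w. (x,y)\<in>R \<Longrightarrow> (y,w)\<in>R \<Longrightarrow> (x,w)\<in>R"
    "\<And>a a' b b'. (a,a')\<in>R \<Longrightarrow> (b,b')\<in>R \<Longrightarrow> (j a b, j a' b')\<in>R"
    "\<And>a a'. (a,a')\<in>R \<Longrightarrow> (c a, c a')\<in>R"
  shows "is_con j c R"
proof -
  have e: "equiv UNIV R"
  proof (rule equivI)
    show "R \<subseteq> UNIV \<times> UNIV" by simp
    show "refl_on UNIV R" by (rule refl_onI, rule assms(1))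
    show "sym R" by (rule symI, erule assms(2))
    show "trans R" by (rule transI, erule (1) assms(3))
  qed
  show ?thesis unfolding is_con_def using e assms(4) assms(5) by blast
qed

lemma con_Int: assumes R: "is_con j c R" and S: "is_con j c S" shows "is_con j c (R \<inter> S)"
proof (rule con_I)
  show "(x,x) \<in> R \<inter> S" for x using con_refl[OF R] con_refl[OF S] by simp
  show "(y,x) \<in> R \<inter> S" if "(x,y) \<in> R \<inter> S" for x y using that con_sym[OF R] con_sym[OF S] by simp
  show "(x,w) \<in> R \<inter> S" if "(x,y) \<in> R \<inter> S" "(y,w) \<in> R \<inter> S" for x y w
    using that con_trans[OF R, of x y w] con_trans[OF S, of x y w] by simp
  show "(j a b, j a' b') \<in> R \<inter> S" if "(a,a') \<in> R \<inter> S" "(b,b') \<in> R \<inter> S" for a a' b b'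
    using that con_j[OF R, of a a' b b'] con_j[OF S, of a a' b b'] by simp
  show "(c a, c a') \<in> R \<inter> S" if "(a,a') \<in> R \<inter> S" for a a'
    using that con_c[OF R] con_c[OF S] by simp
qed

lemma join_mem: "(x,y) \<in> con_join j c R S \<longleftrightarrow> (\<forall>T. is_con j c T \<longrightarrow> R \<union> S \<subseteq> T \<longrightarrow> (x,y)\<in>T)"
  unfolding con_join_def by blast

lemma join_memD: "(x,y) \<in> con_join j c R S \<Longrightarrow> is_con j c T \<Longrightarrow> R \<union> S \<subseteq> T \<Longrightarrow> (x,y)\<in>T"
  unfolding join_mem by blast
lemma join_memI: "(\<And>T. is_con j c T \<Longrightarrow> R \<union> S \<subseteq> T \<Longrightarrow> (x,y)\<in>T) \<Longrightarrow> (x,y) \<in> con_join j c R S"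
  unfolding join_mem by blast

lemma join_con: "is_con j c (con_join j c R S)"
proof (rule con_I)
  show "(x,x) \<in> con_join j c R S" for x by (rule join_memI, erule con_refl)
  show "(y,x) \<in> con_join j c R S" if "(x,y) \<in> con_join j c R S" for x y
  proof (rule join_memI)
    fix T assume T: "is_con j c T" and TS: "R \<union> S \<subseteq> T"
    show "(y,x) \<in> T" by (rule con_sym[OF T join_memD[OF that T TS]])
  qed
  show "(x,w) \<in> con_join j c R S" if "(x,y) \<in> con_join j c R S" "(y,w) \<in> con_join j c R S" for x y w
  proof (rule join_memI)
    fix T assume T: "is_con j c T" and TS: "R \<union> S \<subseteq> T"
    show "(x,w) \<in> T" by (rule con_trans[OF T join_memD[OF that(1) T TS] join_memD[OF that(2) T TS]])
  qed
  show "(j a b, j a' b') \<in> con_join j c R S" if "(a,a') \<in> con_join j c R S" "(b,b') \<in> con_join j c R S" for a a' b b'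
  proof (rule join_memI)
    fix T assume T: "is_con j c T" and TS: "R \<union> S \<subseteq> T"
    show "(j a b, j a' b') \<in> T" by (rule con_j[OF T join_memD[OF that(1) T TS] join_memD[OF that(2) T TS]])
  qed
  show "(c a, c a') \<in> con_join j c R S" if "(a,a') \<in> con_join j c R S" for a a'
  proof (rule join_memI)
    fix T assume T: "is_con j c T" and TS: "R \<union> S \<subseteq> T"
    show "(c a, c a') \<in> T" by (rule con_c[OF T join_memD[OF that T TS]])
  qed
qed

lemma join_ub: "R \<union> S \<subseteq> con_join j c R S" unfolding con_join_def by blast
lemma join_least: "is_con j c T \<Longrightarrow> R \<union> S \<subseteq> T \<Longrightarrow> con_join j c R S \<subseteq> T"
  unfolding con_join_def by blast

lemma trancl_map:
  assumes "(x,y) \<in> (S \<union> T)\<^sup>+" "\<And>a b. (a,b)\<in>S \<Longrightarrow> (f a, f b)\<in>S" "\<And>a b. (a,b)\<in>T \<Longrightarrow> (f a, f b)\<in>T"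
  shows "(f x, f y) \<in> (S \<union> T)\<^sup>+"
  using assms(1)
proof (induction rule: trancl_induct)
  case (base y) hence "(f x, f y) \<in> S \<union> T" using assms(2,3) by blast
  thus ?case by (rule r_into_trancl)
next
  case (step y w)
  hence "(f y, f w) \<in> S \<union> T" using assms(2,3) by blast
  hence "(f y, f w) \<in> (S \<union> T)\<^sup>+" by (rule r_into_trancl)
  thus ?case using step.IH by (meson trancl_trans)
qed

lemma trancl_con:
  assumes S: "is_con j c S" and T: "is_con j c T"
  shows "is_con j c ((S \<union> T)\<^sup>+)"
proof (rule con_I)
  show "(x,x) \<in> (S \<union> T)\<^sup>+" for x by (rule r_into_trancl, rule UnI1, rule con_refl[OF S])
  have sy: "sym (S \<union> T)" using con_sym[OF S] con_sym[OF T] unfolding sym_def by blast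
  show "(y,x) \<in> (S \<union> T)\<^sup>+" if "(x,y) \<in> (S \<union> T)\<^sup>+" for x y
    using sym_trancl[OF sy] that unfolding sym_def by blast
  show "(x,w) \<in> (S \<union> T)\<^sup>+" if "(x,y) \<in> (S \<union> T)\<^sup>+" "(y,w) \<in> (S \<union> T)\<^sup>+" for x y w
    using that by (meson trancl_trans)
  show "(j a b, j a' b') \<in> (S \<union> T)\<^sup>+" if "(a,a') \<in> (S \<union> T)\<^sup>+" "(b,b') \<in> (S \<union> T)\<^sup>+" for a a' b b'
  proof -
    have "(j a b, j a' b) \<in> (S \<union> T)\<^sup>+"
      by (rule trancl_map[OF that(1)], erule con_j[OF S _ con_refl[OF S]], erule con_j[OF T _ con_refl[OF T]])
    moreover have "(j a' b, j a' b') \<in> (S \<union> T)\<^sup>+"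
      by (rule trancl_map[OF that(2)], erule con_j[OF S con_refl[OF S]], erule con_j[OF T con_refl[OF T]])
    ultimately show ?thesis by (meson trancl_trans)
  qed
  show "(c a, c a') \<in> (S \<union> T)\<^sup>+" if "(a,a') \<in> (S \<union> T)\<^sup>+" for a a'
    by (rule trancl_map[OF that], erule con_c[OF S], erule con_c[OF T])
qed

lemma majority_distrib:
  fixes M :: "'a \<Rightarrow> 'a \<Rightarrow> 'a \<Rightarrow> 'a"
  assumes M1: "\<And>x y. M x x y = x" and M2: "\<And>x y. M x y x = x" and M3: "\<And>x y. M y x x = x"
    and Mc: "\<And>R a a' x x' b b'. is_con j c R \<Longrightarrow> (a,a')\<in>R \<Longrightarrow> (x,x')\<in>R \<Longrightarrow> (b,b')\<in>R \<Longrightarrow> (M a x b, M a' x' b')\<in>R"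
  shows "con_distributive j c"
  unfolding con_distributive_def
proof (intro allI impI)
  fix R S T assume R: "is_con j c R" and S: "is_con j c S" and T: "is_con j c T"
  let ?J = "con_join j c (R \<inter> S) (R \<inter> T)"
  have J: "is_con j c ?J" by (rule join_con)
  have Jub: "(R \<inter> S) \<union> (R \<inter> T) \<subseteq> ?J" by (rule join_ub)
  have ST: "(M a x b, M a y b) \<in> S \<union> T" if "(x,y) \<in> S \<union> T" for a x y b
  proof (cases "(x,y)\<in>S")
    case True thus ?thesis using Mc[OF S con_refl[OF S] True con_refl[OF S]] by simp
  next
    case False hence "(x,y)\<in>T" using that by simp
    thus ?thesis using Mc[OF T con_refl[OF T] _ con_refl[OF T]] by simp
  qed
  have "R \<inter> con_join j c S T \<subseteq> ?J"
  proof
    fix p assume p: "p \<in> R \<inter> con_join j c S T"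
    obtain a b where ab: "p = (a,b)" by (cases p)
    have aR: "(a,b) \<in> R" using p ab by simp
    have Ra: "(a, M a y b) \<in> R" for y
    proof -
      have "(M a y a, M a y b) \<in> R" using Mc[OF R con_refl[OF R] con_refl[OF R] aR] .
      thus ?thesis using M2 by simp
    qed
    have "S \<union> T \<subseteq> (S \<union> T)\<^sup>+" by (auto intro: r_into_trancl')
    hence "con_join j c S T \<subseteq> (S \<union> T)\<^sup>+" by (rule join_least[OF trancl_con[OF S T]])
    hence ab': "(a,b) \<in> (S \<union> T)\<^sup>+" using p ab by blast
    have H: "(a, M a y b) \<in> ?J" if "(a,y) \<in> (S \<union> T)\<^sup>+" for y
      using that
    proof (induction rule: trancl_induct)
      case (base y)
      have "(M a a b, M a y b) \<in> S \<union> T" using ST[OF base] .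
      hence "(a, M a y b) \<in> (R \<inter> S) \<union> (R \<inter> T)" using Ra[of y] M1 by simp
      thus ?case using Jub by (rule subsetD[rotated])
    next
      case (step y w)
      have "(M a y b, a) \<in> R" using con_sym[OF R Ra[of y]] .
      hence r: "(M a y b, M a w b) \<in> R" using con_trans[OF R _ Ra[of w]] by simp
      have "(M a y b, M a w b) \<in> S \<union> T" using ST[OF step(2)] .
      hence "(M a y b, M a w b) \<in> (R \<inter> S) \<union> (R \<inter> T)" using r by simp
      hence "(M a y b, M a w b) \<in> ?J" using Jub by (rule subsetD[rotated])
      thus ?case using con_trans[OF J step.IH] by simp
    qed
    show "p \<in> ?J" using H[OF ab'] ab M3 by simp
  qed
  moreover have "?J \<subseteq> R \<inter> con_join j c S T"
  proof (rule join_least[OF con_Int[OF R join_con]])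
    show "R \<inter> S \<union> R \<inter> T \<subseteq> R \<inter> con_join j c S T" using join_ub[of S T j c] by blast
  qed
  ultimately show "R \<inter> con_join j c S T = ?J" by (rule subset_antisym)
qed

lemma MJ_cong: assumes R: "is_con j c R" and "(a,a')\<in>R" "(x,x')\<in>R" "(b,b')\<in>R"
  shows "(MJ j c a x b, MJ j c a' x' b')\<in>R"
  unfolding MJ_def by (rule con_j[OF R con_j[OF R con_m[OF R assms(2,3)] con_m[OF R assms(3,4)]] con_m[OF R assms(4,2)]])

lemma D1_cong: assumes R: "is_con j c R" and "(a,a')\<in>R" "(x,x')\<in>R"
  shows "(D1 j c a x, D1 j c a' x')\<in>R"
  unfolding D1_def by (rule con_m[OF R assms(2) con_c[OF R con_m[OF R assms(2,3)]]])

lemma D2_cong: assumes R: "is_con j c R" and "(a,a')\<in>R" "(x,x')\<in>R"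
  shows "(D2 j c a x, D2 j c a' x')\<in>R"
  unfolding D2_def by (rule con_m[OF R assms(3) con_c[OF R con_m[OF R assms(2,3)]]])

lemma PM_cong: assumes R: "is_con j c R" and "(a,a')\<in>R" "(x,x')\<in>R" "(b,b')\<in>R"
  shows "(PM j c a x b, PM j c a' x' b')\<in>R"
  unfolding PM_def by (rule con_j[OF R con_m[OF R assms(2) con_c[OF R D1_cong[OF R assms(3,4)]]] D2_cong[OF R assms(3,4)]])

lemma dirc_distrib: assumes "dirc j c z u" shows "con_distributive j c"
proof (rule majority_distrib[where M = "MJ j c"])
  show "MJ j c x x y = x" for x y using dirc.MJ1[OF assms] .
  show "MJ j c x y x = x" for x y using dirc.MJ2[OF assms] .
  show "MJ j c y x x = x" for x y using dirc.MJ3[OF assms] .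
  show "(MJ j c a x b, MJ j c a' x' b')\<in>R" if "is_con j c R" "(a,a')\<in>R" "(x,x')\<in>R" "(b,b')\<in>R"
    for R a a' x x' b b' by (rule MJ_cong[OF that])
qed

lemma wdir_perm_aux: assumes W: "wdir j c z u" and R: "is_con j c R" and S: "is_con j c S"
  shows "R O S \<subseteq> S O R"
proof
  fix p assume "p \<in> R O S"
  then obtain x y w where p: "p = (x,w)" and xy: "(x,y)\<in>R" and yw: "(y,w)\<in>S" by blast
  have "(PM j c x y y, PM j c x y w) \<in> S" by (rule PM_cong[OF S con_refl[OF S] con_refl[OF S] yw])
  hence 1: "(x, PM j c x y w) \<in> S" using wdir.E2[OF W] by simp
  have "(PM j c x y w, PM j c y y w) \<in> R" by (rule PM_cong[OF R xy con_refl[OF R] con_refl[OF R]])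
  hence 2: "(PM j c x y w, w) \<in> R" using wdir.E1[OF W] by simp
  show "p \<in> S O R" using 1 2 p by blast
qed

lemma wdir_perm: assumes W: "wdir j c z u" shows "con_permutable j c"
  unfolding con_permutable_def
proof (intro allI impI)
  fix R S assume "is_con j c R" "is_con j c S"
  thus "R O S = S O R" by (intro subset_antisym wdir_perm_aux[OF W])
qed

lemma wdir_transfer:
  assumes W: "wdir j c z u" and R: "is_con j c R" and S: "is_con j c S"
    and eq: "R `` {a} = S `` {a}" and dz: "(d,z) \<in> R"
  shows "(d,z) \<in> S"
proof -
  interpret wdir j c z u by (rule W)
  have "(j a d, j a z) \<in> R" by (rule con_j[OF R con_refl[OF R] dz])
  hence "(a, j a d) \<in> R" using con_sym[OF R] zr by simp
  hence "(a, j a d) \<in> S" using eq by blast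
  hence "(mt d (j a d), mt d a) \<in> S" by (rule con_m[OF S con_refl[OF S] con_sym[OF S]])
  hence 3: "(d, mt d a) \<in> S" using comm[of a d] mt_absorb[of d a] by simp
  have "(mt a (c d), mt a (c z)) \<in> R" by (rule con_m[OF R con_refl[OF R] con_c[OF R dz]])
  hence "(a, mt a (c d)) \<in> R" using con_sym[OF R] mt_c0 by simp
  hence "(a, mt a (c d)) \<in> S" using eq by blast
  hence "(j (c d) (mt a (c d)), j (c d) a) \<in> S" by (rule con_j[OF S con_refl[OF S] con_sym[OF S]])
  hence "(c d, j (c d) a) \<in> S" using comm[of "c d" "mt a (c d)"] mt_le2[of a "c d"] by simp
  hence "(c (c d), c (j (c d) a)) \<in> S" by (rule con_c[OF S])
  hence 4: "(d, c (j (c d) a)) \<in> S" using iv by simp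
  have "(mt d d, mt (mt d a) (c (j (c d) a))) \<in> S" by (rule con_m[OF S 3 4])
  thus ?thesis using mt_idem mt_compl by simp
qed

lemma wdir_reg_aux:
  assumes W: "wdir j c z u" and R: "is_con j c R" and S: "is_con j c S"
    and eq: "R `` {a} = S `` {a}"
  shows "R \<subseteq> S"
proof
  interpret wdir j c z u by (rule W)
  fix p assume "p \<in> R"
  then obtain x y where p: "p = (x,y)" and xy: "(x,y) \<in> R" by (cases p) auto
  have yx: "(y,x) \<in> R" using con_sym[OF R xy] .
  have "(D1 j c x y, D1 j c x x) \<in> R" by (rule D1_cong[OF R con_refl[OF R] yx])
  hence d1: "(D1 j c x y, z) \<in> S" using d1_0 wdir_transfer[OF W R S eq] by simp
  have "(D2 j c x y, D2 j c x x) \<in> R" by (rule D2_cong[OF R con_refl[OF R] yx])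
  hence d2: "(D2 j c x y, z) \<in> S" using d2_0 wdir_transfer[OF W R S eq] by simp
  have "(j (mt x (c (D1 j c x y))) (D2 j c x y), j (mt x (c z)) z) \<in> S"
    by (rule con_j[OF S con_m[OF S con_refl[OF S] con_c[OF S d1]] d2])
  hence "(y, x) \<in> S" using E1[of x y] mt_c0 zr unfolding PM_def by simp
  thus "p \<in> S" using p con_sym[OF S] by blast
qed

lemma wdir_reg: assumes W: "wdir j c z u" shows "con_regular j c"
  unfolding con_regular_def
proof (intro allI impI)
  fix a R S assume R: "is_con j c R" and S: "is_con j c S" and eq: "R `` {a} = S `` {a}"
  show "R = S" using wdir_reg_aux[OF W R S eq] wdir_reg_aux[OF W S R eq[symmetric]] by (rule subset_antisym)
qed

lemma A_dirc: assumes "in_A j c z u" shows "dirc j c z u"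
  using assms unfolding in_A_def bdir_def cond_ii_def cond_iv_def dmeet_def
  by unfold_locales blast+

lemma W_wdir: assumes "in_W j c z u" shows "wdir j c z u"
proof -
  have d: "dirc j c z u" using assms unfolding in_W_def bdir_def cond_ii_def cond_iv_def dmeet_def
    by unfold_locales blast+
  show ?thesis
    using assms unfolding in_W_def cond_iii_def cond_i'_def dleq_def dmeet_def
    by (intro wdir.intro[OF d] wdir_axioms.intro) blast+
qed

theorem mainTheorem7:
  shows "(\<forall>(j :: 'a \<Rightarrow> 'a \<Rightarrow> 'a) c z u. in_A j c z u \<longrightarrow> con_distributive j c) \<and>
         (\<forall>(j :: 'b \<Rightarrow> 'b \<Rightarrow> 'b) c z u. in_W j c z u \<longrightarrow>
            con_permutable j c \<and> con_distributive j c \<and> con_regular j c)"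
proof (intro conjI allI impI)
  fix j :: "'a \<Rightarrow> 'a \<Rightarrow> 'a" and c z u assume "in_A j c z u"
  thus "con_distributive j c" by (rule dirc_distrib[OF A_dirc])
next
  fix j :: "'b \<Rightarrow> 'b \<Rightarrow> 'b" and c z u assume "in_W j c z u"
  hence W: "wdir j c z u" by (rule W_wdir)
  show "con_permutable j c" by (rule wdir_perm[OF W])
  show "con_distributive j c" by (rule dirc_distrib[OF wdir.axioms(1)[OF W]])
  show "con_regular j c" by (rule wdir_reg[OF W])
qed

end
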